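(* Let $1\le q<p$, $k\in\mathbb{N}$, and $x\in\mathbb{R}^n\setminus\{0\}$. (1) Let $\varepsilon>0$. If $x$ is $(k,\varepsilon)$-$\ell_p$-compressible, then $\Delta_{q,p}(x)\ge\frac{1}{(k/n)^{1/q-1/p}+\varepsilon}$. (2) The vector $x$ is $\left(k,\frac{(n/k)^{1/q}}{\Delta_{q,p}(x)}\right)$-$\ell_p$-compressible. In particular, if a subspace $X\subseteq\mathbb{R}^n$ is $(k,\varepsilon)$-$\ell_p$-spread, then $\Delta_{q,p}(X)\le\frac{1}{\varepsilon}\left(\frac{n}{k}\right)^{1/q}$ for all $1\le q<p$.
   Context: A vector $y$ is $k$-sparse if $|\mathrm{supp}(y)|\le k$. A nonzero $x$ is $(k,\varepsilon)$-$\ell_p$-compressible if some $k$-sparse $y$ has $\|x-y\|_p\le\varepsilon\|x\|_p$, and $(k,\varepsilon)$-$\ell_p$-spread otherwise; a subspace is $(k,\varepsilon)$-$\ell_p$-spread if all its nonzero vectors are. For nonzero $x\in\mathbb{R}^n$, $\Delta_{q,p}(x):=\frac{\|x\|_p\, n^{1/q-1/p}}{\|x\|_q}$, and for a subspace $X$, $\Delta_{q,p}(X):=\sup\{\Delta_{q,p}(x):x\in X\setminus\{0\}\}$. *)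

theory Defs
  imports "HOL-Analysis.Analysis"
begin

text \<open>Vectors in R^n are modelled as real^'n with n = CARD('n).\<close>

definition lp_norm :: "real \<Rightarrow> real^'n \<Rightarrow> real" where
  "lp_norm p x = (\<Sum>i\<in>UNIV. \<bar>x $ i\<bar> powr p) powr (1 / p)"

definition k_sparse :: "nat \<Rightarrow> real^'n \<Rightarrow> bool" where
  "k_sparse k y \<longleftrightarrow> card {i. y $ i \<noteq> 0} \<le> k"

definition lp_compressible :: "real \<Rightarrow> nat \<Rightarrow> real \<Rightarrow> real^'n \<Rightarrow> bool" where
  "lp_compressible p k \<epsilon> x \<longleftrightarrow> x \<noteq> 0 \<and>
     (\<exists>y. k_sparse k y \<and> lp_norm p (x - y) \<le> \<epsilon> * lp_norm p x)"

definition lp_spread :: "real \<Rightarrow> nat \<Rightarrow> real \<Rightarrow> real^'n \<Rightarrow> bool" where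
  "lp_spread p k \<epsilon> x \<longleftrightarrow> x \<noteq> 0 \<and> \<not> lp_compressible p k \<epsilon> x"

definition subspace_lp_spread :: "real \<Rightarrow> nat \<Rightarrow> real \<Rightarrow> (real^'n) set \<Rightarrow> bool" where
  "subspace_lp_spread p k \<epsilon> X \<longleftrightarrow> (\<forall>x\<in>X. x \<noteq> 0 \<longrightarrow> lp_spread p k \<epsilon> x)"

definition Delta :: "real \<Rightarrow> real \<Rightarrow> real^'n \<Rightarrow> real" where
  "Delta q p x = lp_norm p x * real CARD('n) powr (1 / q - 1 / p) / lp_norm q x"

text \<open>Supremum taken in the extended reals (sup of the empty set is -\<infinity>).\<close>
definition Delta_sub :: "real \<Rightarrow> real \<Rightarrow> (real^'n) set \<Rightarrow> ereal" where
  "Delta_sub q p X = (SUP x\<in>X - {0}. ereal (Delta q p x))"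

end

theory Submission imports Defs begin

lemma young1:
  fixes u r :: real assumes "r > 1" "u \<ge> 0"
  shows "u \<le> u powr r / r + (1 - 1/r)"
proof -
  have "u * 1 \<le> u powr r / r + 1 powr (r/(r-1)) / (r/(r-1))"
    by (rule Youngs_inequality) (use assms in \<open>auto simp: field_simps\<close>)
  thus ?thesis using assms by (simp add: field_simps)
qed

lemma power_mean_sum:
  fixes f :: "'a \<Rightarrow> real"
  assumes "finite A" "\<And>i. f i \<ge> 0" "r > 1"
  shows "sum f A \<le> real (card A) powr (1 - 1/r) * (\<Sum>i\<in>A. f i powr r) powr (1/r)"
proof (cases "(\<Sum>i\<in>A. f i powr r) = 0")
  case True
  then have "\<forall>i\<in>A. f i powr r = 0"
    using sum_nonneg_eq_0_iff[OF assms(1), of "\<lambda>i. f i powr r"] by simp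
  then have "\<forall>i\<in>A. f i = 0" by simp
  then show ?thesis by simp
next
  case False
  define T where "T = (\<Sum>i\<in>A. f i powr r)"
  have T0: "T > 0" using False T_def by (simp add: less_le sum_nonneg)
  have "A \<noteq> {}" using False by auto
  then have m0: "real (card A) > 0" using assms(1) by (simp add: card_gt_0_iff)
  define m where "m = real (card A)"
  define M where "M = (T/m) powr (1/r)"
  have M0: "M > 0" using T0 m0 by (simp add: M_def m_def)
  have Mr: "M powr r = T/m" using T0 m0 assms(3) by (simp add: M_def m_def powr_powr)
  have "(\<Sum>i\<in>A. f i / M) \<le> (\<Sum>i\<in>A. (f i / M) powr r / r + (1 - 1/r))"
    by (rule sum_mono, rule young1) (use assms M0 in auto)
  also have "\<dots> = (\<Sum>i\<in>A. f i powr r) / (M powr r) / r + m * (1 - 1/r)"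
    using M0 assms(2) by (simp add: powr_divide sum.distrib sum_divide_distrib m_def)
  also have "\<dots> = m"
    unfolding T_def[symmetric] m_def[symmetric] Mr using T0 m0 assms(3) by (simp add: field_simps)
  finally have "sum f A / M \<le> m" by (simp add: sum_divide_distrib)
  then have "sum f A \<le> m * M" using M0 by (simp add: field_simps)
  also have "m * M = m powr (1 - 1/r) * T powr (1/r)"
    using m0 T0 by (simp add: M_def m_def powr_divide powr_diff field_simps)
  finally show ?thesis by (simp add: m_def T_def)
qed

lemma lq_le_lp:
  fixes g :: "'a \<Rightarrow> real"
  assumes "finite A" "0 < q" "q < p"
  shows "(\<Sum>i\<in>A. \<bar>g i\<bar> powr q) powr (1/q) \<le>
     real (card A) powr (1/q - 1/p) * (\<Sum>i\<in>A. \<bar>g i\<bar> powr p) powr (1/p)"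
proof -
  have r: "p/q > 1" using assms by simp
  have "(\<Sum>i\<in>A. \<bar>g i\<bar> powr q) \<le> real (card A) powr (1 - 1/(p/q)) *
      (\<Sum>i\<in>A. (\<bar>g i\<bar> powr q) powr (p/q)) powr (1/(p/q))"
    by (rule power_mean_sum[OF assms(1) _ r]) simp
  also have "(\<Sum>i\<in>A. (\<bar>g i\<bar> powr q) powr (p/q)) = (\<Sum>i\<in>A. \<bar>g i\<bar> powr p)"
    using assms by (simp add: powr_powr)
  finally have h: "(\<Sum>i\<in>A. \<bar>g i\<bar> powr q) \<le> real (card A) powr (1 - q/p) *
      (\<Sum>i\<in>A. \<bar>g i\<bar> powr p) powr (q/p)" by simp
  have "(\<Sum>i\<in>A. \<bar>g i\<bar> powr q) powr (1/q) \<le> (real (card A) powr (1 - q/p) *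
      (\<Sum>i\<in>A. \<bar>g i\<bar> powr p) powr (q/p)) powr (1/q)"
    by (rule powr_mono2) (use assms h in \<open>auto intro: sum_nonneg\<close>)
  also have "\<dots> = real (card A) powr ((1 - q/p)/q) * (\<Sum>i\<in>A. \<bar>g i\<bar> powr p) powr (q/p/q)"
    by (simp add: powr_mult powr_powr sum_nonneg)
  also have "(1 - q/p)/q = 1/q - 1/p" using assms by (simp add: field_simps)
  also have "q/p/q = 1/p" using assms by simp
  finally show ?thesis .
qed

lemma powr_subadd:
  fixes a b s :: real
  assumes "a \<ge> 0" "b \<ge> 0" "0 < s" "s \<le> 1"
  shows "(a + b) powr s \<le> a powr s + b powr s"
proof (cases "a + b = 0")
  case True then show ?thesis using assms by simp
next
  case False
  then have ab: "a + b > 0" using assms by simp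
  have 1: "a/(a+b) \<le> (a/(a+b)) powr s"
    using powr_mono'[of s 1 "a/(a+b)"] assms ab by simp
  have 2: "b/(a+b) \<le> (b/(a+b)) powr s"
    using powr_mono'[of s 1 "b/(a+b)"] assms ab by simp
  have "1 \<le> (a/(a+b)) powr s + (b/(a+b)) powr s"
  proof -
    have "a/(a+b)+b/(a+b) = 1" using ab by (simp add: add_divide_distrib[symmetric])
    then show ?thesis using 1 2 by linarith
  qed
  also have "\<dots> = (a powr s + b powr s) / (a+b) powr s"
    using assms ab by (simp add: powr_divide add_divide_distrib)
  finally show ?thesis using ab by (simp add: field_simps)
qed

lemma lp_norm_pos:
  fixes x :: "real^'n"
  assumes "x \<noteq> 0" "p > 0"
  shows "lp_norm p x > 0"
proof -
  obtain j where j: "x $ j \<noteq> 0" using assms(1) by (metis vec_eq_iff zero_index)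
  have "0 < \<bar>x $ j\<bar> powr p" using j by simp
  also have "\<dots> \<le> (\<Sum>i\<in>UNIV. \<bar>x $ i\<bar> powr p)"
    by (rule member_le_sum) auto
  finally show ?thesis unfolding lp_norm_def by simp
qed

lemma lp_norm_nonneg: "lp_norm p x \<ge> 0"
  unfolding lp_norm_def by simp


lemma part1:
  fixes x y :: "real^'n" and p q \<epsilon> :: real and k :: nat
  assumes q1: "1 \<le> q" and qp: "q < p" and x0: "x \<noteq> 0"
    and ys: "k_sparse k y" and yb: "lp_norm p (x - y) \<le> \<epsilon> * lp_norm p x"
  shows "lp_norm q x \<le> (real k powr (1/q - 1/p) + real CARD('n) powr (1/q - 1/p) * \<epsilon>) * lp_norm p x"
proof -
  define S where "S = {i. y $ i \<noteq> 0}"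
  define a where "a = 1/q - 1/p"
  have a0: "a > 0" using q1 qp by (simp add: a_def field_simps)
  have cS: "card S \<le> k" using ys by (simp add: k_sparse_def S_def)
  define P where "P = lp_norm p x"
  have "lp_norm q x = ((\<Sum>i\<in>S. \<bar>x$i\<bar> powr q) + (\<Sum>i\<in>-S. \<bar>x$i\<bar> powr q)) powr (1/q)"
    unfolding lp_norm_def by (subst sum.union_disjoint[symmetric]) (auto simp: Un_commute)
  also have "\<dots> \<le> (\<Sum>i\<in>S. \<bar>x$i\<bar> powr q) powr (1/q) + (\<Sum>i\<in>-S. \<bar>x$i\<bar> powr q) powr (1/q)"
    by (rule powr_subadd) (use q1 in \<open>auto intro: sum_nonneg\<close>)
  also have "\<dots> \<le> real (card S) powr a * (\<Sum>i\<in>S. \<bar>x$i\<bar> powr p) powr (1/p)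
      + real (card (-S)) powr a * (\<Sum>i\<in>-S. \<bar>x$i\<bar> powr p) powr (1/p)"
    unfolding a_def by (intro add_mono lq_le_lp) (use q1 qp in auto)
  also have "\<dots> \<le> real k powr a * P + real CARD('n) powr a * (\<epsilon> * P)"
  proof (intro add_mono mult_mono)
    show "real (card S) powr a \<le> real k powr a"
      using cS a0 by (intro powr_mono2) auto
    show "real (card (-S)) powr a \<le> real CARD('n) powr a"
      using a0 by (intro powr_mono2) (auto simp: card_mono)
    show "(\<Sum>i\<in>S. \<bar>x$i\<bar> powr p) powr (1/p) \<le> P"
      unfolding P_def lp_norm_def using q1 qp
      by (intro powr_mono2 sum_mono2) (auto intro: sum_nonneg)
    have "(\<Sum>i\<in>-S. \<bar>x$i\<bar> powr p) = (\<Sum>i\<in>-S. \<bar>(x-y)$i\<bar> powr p)"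
      by (rule sum.cong) (auto simp: S_def)
    also have "\<dots> \<le> (\<Sum>i\<in>UNIV. \<bar>(x-y)$i\<bar> powr p)"
      by (rule sum_mono2) auto
    finally have "(\<Sum>i\<in>-S. \<bar>x$i\<bar> powr p) powr (1/p) \<le> lp_norm p (x - y)"
      unfolding lp_norm_def using q1 qp by (intro powr_mono2) (auto intro: sum_nonneg)
    then show "(\<Sum>i\<in>-S. \<bar>x$i\<bar> powr p) powr (1/p) \<le> \<epsilon> * P"
      using yb P_def by simp
  qed (auto simp: P_def lp_norm_def)
  finally show ?thesis by (simp add: a_def P_def algebra_simps)
qed


lemma part2:
  fixes x :: "real^'n" and p q :: real and k :: nat
  assumes q1: "1 \<le> q" and qp: "q < p" and x0: "x \<noteq> 0" and k1: "k \<ge> 1"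
  shows "lp_compressible p k ((real CARD('n) / real k) powr (1 / q) / Delta q p x) x"
proof -
  define Q where "Q = (\<Sum>i\<in>UNIV. \<bar>x$i\<bar> powr q)"
  define n where "n = real CARD('n)"
  define S where "S = {i. \<bar>x$i\<bar> powr q > Q / real k}"
  define y :: "real^'n" where "y = (\<chi> i. if i \<in> S then x$i else 0)"
  define t where "t = (Q / real k) powr (1/q)"
  have Qpos: "lp_norm q x > 0" using lp_norm_pos[OF x0] q1 by simp
  then have Q0: "Q > 0" unfolding lp_norm_def Q_def using sum_nonneg[of UNIV "\<lambda>i. \<bar>x$i\<bar> powr q"] by (simp add: less_le)
  have kpos: "real k > 0" using k1 by simp
  have n0: "n > 0" by (simp add: n_def)
  have cS: "card S \<le> k"
  proof (cases "S = {}")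
    case False
    have "(\<Sum>i\<in>S. Q / real k) < (\<Sum>i\<in>S. \<bar>x$i\<bar> powr q)"
      by (rule sum_strict_mono) (use False in \<open>auto simp: S_def\<close>)
    also have "\<dots> \<le> Q" unfolding Q_def by (rule sum_mono2) auto
    finally have "real (card S) * Q / real k < Q" by simp
    then have "real (card S) < real k" using Q0 kpos by (simp add: field_simps)
    then show ?thesis by simp
  qed simp
  have ysp: "k_sparse k y"
    unfolding k_sparse_def
    by (rule le_trans[OF card_mono cS]) (auto simp: y_def)
  have off: "\<bar>(x - y)$i\<bar> powr p \<le> t powr p" for i
  proof (cases "i \<in> S")
    case True then show ?thesis by (simp add: y_def)
  next
    case False
    then have "\<bar>x$i\<bar> powr q \<le> Q / real k" by (simp add: S_def)
    then have "(\<bar>x$i\<bar> powr q) powr (1/q) \<le> t"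
      unfolding t_def using q1 by (intro powr_mono2) auto
    then have "\<bar>x$i\<bar> \<le> t" using q1 by (simp add: powr_powr)
    then show ?thesis using False qp q1 by (intro powr_mono2) (auto simp: y_def)
  qed
  have "lp_norm p (x - y) \<le> (\<Sum>i\<in>(UNIV::'n set). t powr p) powr (1/p)"
    unfolding lp_norm_def using q1 qp
    by (intro powr_mono2 sum_mono off) (auto intro: sum_nonneg)
  also have "\<dots> = n powr (1/p) * t"
    using q1 qp Q0 kpos by (simp add: n_def t_def powr_mult powr_powr)
  also have "\<dots> = (n / real k) powr (1 / q) / Delta q p x * lp_norm p x"
  proof -
    have P: "lp_norm p x > 0" using lp_norm_pos[OF x0] q1 qp by simp
    have e: "lp_norm q x = Q powr (1/q)" by (simp add: lp_norm_def Q_def)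
    have "(n / real k) powr (1 / q) / Delta q p x * lp_norm p x
        = n powr (1/q) / n powr (1/q - 1/p) * (Q powr (1/q) / real k powr (1/q))"
      unfolding Delta_def n_def[symmetric] e using P Qpos e n0 kpos
      by (simp add: powr_divide field_simps)
    also have "n powr (1/q) / n powr (1/q - 1/p) = n powr (1/p)"
      using n0 by (simp add: powr_diff[symmetric])
    finally show ?thesis using Q0 kpos by (simp add: t_def powr_divide)
  qed
  finally show ?thesis unfolding lp_compressible_def n_def using x0 ysp by auto
qed


lemma Delta_pos:
  fixes x :: "real^'n"
  assumes "1 \<le> q" "q < p" "x \<noteq> 0"
  shows "Delta q p x > 0"
  using lp_norm_pos[OF assms(3), of p] lp_norm_pos[OF assms(3), of q] assms
  unfolding Delta_def by simp

theorem proposition3p11: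
  fixes x :: "real^'n" and p q :: real and k :: nat
  assumes "1 \<le> q" and "q < p" and "x \<noteq> 0"
  shows "(\<forall>\<epsilon>>0. lp_compressible p k \<epsilon> x \<longrightarrow>
            Delta q p x \<ge> 1 / ((real k / real CARD('n)) powr (1 / q - 1 / p) + \<epsilon>))
       \<and> (k \<ge> 1 \<longrightarrow>
            lp_compressible p k ((real CARD('n) / real k) powr (1 / q) / Delta q p x) x)
       \<and> (\<forall>(X :: (real^'n) set) \<epsilon>. k \<ge> 1 \<and> subspace X \<and> \<epsilon> > 0 \<and> subspace_lp_spread p k \<epsilon> X \<longrightarrow>
            Delta_sub q p X \<le> ereal (1 / \<epsilon> * (real CARD('n) / real k) powr (1 / q)))"
proof (intro conjI allI impI)
  fix \<epsilon> :: real
  assume e0: "\<epsilon> > 0" and c: "lp_compressible p k \<epsilon> x"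
  then obtain y where ys: "k_sparse k y" and yb: "lp_norm p (x - y) \<le> \<epsilon> * lp_norm p x"
    unfolding lp_compressible_def by blast
  define a where "a = 1/q - 1/p"
  define n where "n = real CARD('n)"
  define P where "P = lp_norm p x"
  define Qn where "Qn = lp_norm q x"
  define K where "K = real k powr a + n powr a * \<epsilon>"
  have P0: "P > 0" using lp_norm_pos[OF assms(3)] assms by (simp add: P_def)
  have Q0: "Qn > 0" using lp_norm_pos[OF assms(3)] assms by (simp add: Qn_def)
  have n0: "n > 0" by (simp add: n_def)
  have na: "n powr a > 0" using n0 by simp
  have K0: "K > 0" unfolding K_def using na e0 by (simp add: add_nonneg_pos)
  have h: "Qn \<le> K * P" using part1[OF assms ys yb]
    by (simp add: K_def Qn_def P_def a_def n_def)
  have "1 / ((real k / n) powr a + \<epsilon>) = n powr a / K"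
    using na by (simp add: K_def powr_divide field_simps)
  also have "\<dots> \<le> P * n powr a / Qn"
    using h na K0 Q0 P0 by (simp add: field_simps mult_left_mono)
  finally show "Delta q p x \<ge> 1 / ((real k / real CARD('n)) powr (1 / q - 1 / p) + \<epsilon>)"
    by (simp add: Delta_def P_def Qn_def a_def n_def)
next
  assume "k \<ge> 1"
  then show "lp_compressible p k ((real CARD('n) / real k) powr (1 / q) / Delta q p x) x"
    using part2[OF assms] by simp
next
  fix X :: "(real^'n) set" and \<epsilon> :: real
  assume H: "k \<ge> 1 \<and> subspace X \<and> \<epsilon> > 0 \<and> subspace_lp_spread p k \<epsilon> X"
  define c where "c = (real CARD('n) / real k) powr (1 / q)"
  show "Delta_sub q p X \<le> ereal (1 / \<epsilon> * (real CARD('n) / real k) powr (1 / q))"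
    unfolding Delta_sub_def
  proof (rule SUP_least)
    fix z assume z: "z \<in> X - {0}"
    then have z0: "z \<noteq> 0" by simp
    have nc: "\<not> lp_compressible p k \<epsilon> z"
      using H z unfolding subspace_lp_spread_def lp_spread_def by auto
    have cz: "lp_compressible p k (c / Delta q p z) z"
      using part2[OF assms(1,2) z0] H by (simp add: c_def)
    have D0: "Delta q p z > 0" using Delta_pos[OF assms(1,2) z0] .
    have "\<not> c / Delta q p z \<le> \<epsilon>"
    proof
      assume le: "c / Delta q p z \<le> \<epsilon>"
      from cz obtain y where "k_sparse k y" "lp_norm p (z - y) \<le> c / Delta q p z * lp_norm p z"
        unfolding lp_compressible_def by blast
      moreover have "c / Delta q p z * lp_norm p z \<le> \<epsilon> * lp_norm p z"
        using le lp_norm_nonneg by (rule mult_right_mono)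
      ultimately have "lp_compressible p k \<epsilon> z"
        unfolding lp_compressible_def using z0 by force
      with nc show False by simp
    qed
    then have "\<epsilon> * Delta q p z < c" using D0 by (simp add: field_simps)
    then have "Delta q p z \<le> 1 / \<epsilon> * c" using H by (simp add: field_simps)
    then show "ereal (Delta q p z) \<le> ereal (1 / \<epsilon> * (real CARD('n) / real k) powr (1 / q))"
      by (simp add: c_def)
  qed
qed

end
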